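(* Let $B$ be a board with $c$ colors. If, in some row or column, there are fewer than $c-1$ blank (empty) cells between some sink and the boundary of the grid, then $B$ has no perfect layout.
   Context: A board is an $m\times n$ grid of unit cells in which exactly $c$ cells are sinks, one of each of $c$ colors, and all other cells are empty. A layout places, in some of the empty cells, arrows, each having one of the $c$ colors and one of the four cardinal directions. A packet of color $i$ may enter the grid through any unit edge of the outer boundary of the grid, into the adjacent cell, moving perpendicular to that edge into the grid; it moves one cell at a time in its current direction, and whenever it enters a cell containing an arrow of color $i$ its direction becomes that arrow's direction (arrows of other colors are ignored). The packet succeeds if it enters the sink of color $i$; it fails if it enters a sink of another color, leaves the grid, or travels forever without reaching a sink. A perfect layout is a layout in which every packet of every color entering through every boundary edge succeeds. *)

theory Defs
  imports Main
begin

(* Cells are pairs (row, column) of integers; the grid is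
   {0..<m} x {0..<n}.  Colors are the naturals 0..<c. *)
type_synonym cell = "int \<times> int"

datatype dir = North | South | West | East

fun delta :: "dir \<Rightarrow> int \<times> int" where
  "delta North = (-1, 0)"
| "delta South = (1, 0)"
| "delta West = (0, -1)"
| "delta East = (0, 1)"

definition in_grid :: "nat \<Rightarrow> nat \<Rightarrow> cell \<Rightarrow> bool" where
  "in_grid m n p \<longleftrightarrow> 0 \<le> fst p \<and> fst p < int m \<and> 0 \<le> snd p \<and> snd p < int n"

definition is_board :: "nat \<Rightarrow> nat \<Rightarrow> nat \<Rightarrow> (nat \<Rightarrow> cell) \<Rightarrow> bool" where
  "is_board m n c sink \<longleftrightarrow> inj_on sink {..<c} \<and> (\<forall>i<c. in_grid m n (sink i))"

definition is_sink :: "nat \<Rightarrow> (nat \<Rightarrow> cell) \<Rightarrow> cell \<Rightarrow> bool" where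
  "is_sink c sink p \<longleftrightarrow> (\<exists>i<c. sink i = p)"

type_synonym layout = "cell \<Rightarrow> (nat \<times> dir) option"

definition is_layout :: "nat \<Rightarrow> nat \<Rightarrow> nat \<Rightarrow> (nat \<Rightarrow> cell) \<Rightarrow> layout \<Rightarrow> bool" where
  "is_layout m n c sink A \<longleftrightarrow>
     (\<forall>p j d. A p = Some (j, d) \<longrightarrow> in_grid m n p \<and> \<not> is_sink c sink p \<and> j < c)"

definition turn :: "layout \<Rightarrow> nat \<Rightarrow> cell \<Rightarrow> dir \<Rightarrow> dir" where
  "turn A i p d = (case A p of Some (j, e) \<Rightarrow> if j = i then e else d | None \<Rightarrow> d)"

(* traj A i p0 d0 k = (cell entered at step k, direction after entering it);
   the packet enters cell p0 (adjacent to the boundary edge) moving in direction d0 *)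
fun traj :: "layout \<Rightarrow> nat \<Rightarrow> cell \<Rightarrow> dir \<Rightarrow> nat \<Rightarrow> cell \<times> dir" where
  "traj A i p0 d0 0 = (p0, turn A i p0 d0)"
| "traj A i p0 d0 (Suc k) =
     (let (p, d) = traj A i p0 d0 k;
          q = (fst p + fst (delta d), snd p + snd (delta d))
      in (q, turn A i q d))"

(* entries through unit edges of the outer boundary: (first cell, inward direction) *)
definition entries :: "nat \<Rightarrow> nat \<Rightarrow> (cell \<times> dir) set" where
  "entries m n =
     {((0, y), South) | y. 0 \<le> y \<and> y < int n}
   \<union> {((int m - 1, y), North) | y. 0 \<le> y \<and> y < int n}
   \<union> {((x, 0), East) | x. 0 \<le> x \<and> x < int m}
   \<union> {((x, int n - 1), West) | x. 0 \<le> x \<and> x < int m}"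

definition succeeds :: "nat \<Rightarrow> nat \<Rightarrow> nat \<Rightarrow> (nat \<Rightarrow> cell) \<Rightarrow> layout \<Rightarrow> nat \<Rightarrow> cell \<Rightarrow> dir \<Rightarrow> bool" where
  "succeeds m n c sink A i p0 d0 \<longleftrightarrow>
     (\<exists>k. fst (traj A i p0 d0 k) = sink i \<and>
        (\<forall>j<k. in_grid m n (fst (traj A i p0 d0 j)) \<and> \<not> is_sink c sink (fst (traj A i p0 d0 j))))"

definition perfect_layout :: "nat \<Rightarrow> nat \<Rightarrow> nat \<Rightarrow> (nat \<Rightarrow> cell) \<Rightarrow> layout \<Rightarrow> bool" where
  "perfect_layout m n c sink A \<longleftrightarrow> is_layout m n c sink A \<and>
     (\<forall>i<c. \<forall>(p0, d0) \<in> entries m n. succeeds m n c sink A i p0 d0)"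

definition sink_near_boundary :: "nat \<Rightarrow> nat \<Rightarrow> nat \<Rightarrow> (nat \<Rightarrow> cell) \<Rightarrow> bool" where
  "sink_near_boundary m n c sink \<longleftrightarrow> (\<exists>i<c.
     let (x, y) = sink i in
       card {x'. 0 \<le> x' \<and> x' < x \<and> \<not> is_sink c sink (x', y)} < c - 1
     \<or> card {x'. x < x' \<and> x' < int m \<and> \<not> is_sink c sink (x', y)} < c - 1
     \<or> card {y'. 0 \<le> y' \<and> y' < y \<and> \<not> is_sink c sink (x, y')} < c - 1
     \<or> card {y'. y < y' \<and> y' < int n \<and> \<not> is_sink c sink (x, y')} < c - 1)"

end

theory Submission
  imports Defs
begin

definition line :: "cell \<Rightarrow> dir \<Rightarrow> nat \<Rightarrow> cell" where
  "line p0 d k = (fst p0 + int k * fst (delta d), snd p0 + int k * snd (delta d))"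

lemma traj_straight:
  assumes "\<forall>k<N. turn A j (line p0 d k) d = d" "k \<le> N"
  shows "traj A j p0 d k = (line p0 d k, turn A j (line p0 d k) d)"
  using assms(2)
proof (induction k)
  case 0
  then show ?case by (simp add: line_def)
next
  case (Suc k)
  then have "turn A j (line p0 d k) d = d" using assms(1) by simp
  then show ?case using Suc by (simp add: line_def algebra_simps Let_def)
qed

lemma key:
  assumes perf: "perfect_layout m n c sink A" and ent: "(p0, d) \<in> entries m n"
    and inj: "inj_on sink {..<c}"
    and i0: "i0 < c" "sink i0 = line p0 d x0"
    and ns: "\<forall>k<x0. \<not> is_sink c sink (line p0 d k)"
    and j: "j < c" "j \<noteq> i0"
  shows "\<exists>k<x0. \<exists>e. e \<noteq> d \<and> A (line p0 d k) = Some (j, e)"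
proof (rule ccontr)
  assume H: "\<not> ?thesis"
  have T: "\<forall>k<x0. turn A j (line p0 d k) d = d"
  proof (intro allI impI)
    fix k assume "k < x0"
    with H have "\<forall>e. A (line p0 d k) = Some (j, e) \<longrightarrow> e = d" by blast
    then show "turn A j (line p0 d k) d = d"
      by (auto simp: turn_def split: option.splits)
  qed
  have S: "succeeds m n c sink A j p0 d" using perf ent j(1) by (auto simp: perfect_layout_def)
  then obtain K where K1: "fst (traj A j p0 d K) = sink j"
    and K2: "\<forall>l<K. in_grid m n (fst (traj A j p0 d l)) \<and> \<not> is_sink c sink (fst (traj A j p0 d l))"
    by (auto simp: succeeds_def)
  have neq: "sink j \<noteq> sink i0" using inj i0(1) j by (auto dest: inj_onD)
  show False
  proof (cases "K \<le> x0")
    case True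
    then have "fst (traj A j p0 d K) = line p0 d K" using traj_straight[OF T] by simp
    show False
    proof (cases "K = x0")
      case True then show ?thesis using K1 neq i0(2) \<open>fst (traj A j p0 d K) = line p0 d K\<close> by simp
    next
      case False
      then have "K < x0" using \<open>K \<le> x0\<close> by simp
      then have "\<not> is_sink c sink (line p0 d K)" using ns by simp
      then show ?thesis using K1 j(1) \<open>fst (traj A j p0 d K) = line p0 d K\<close>
        by (auto simp: is_sink_def)
    qed
  next
    case False
    then have "\<not> is_sink c sink (fst (traj A j p0 d x0))" using K2 by simp
    moreover have "fst (traj A j p0 d x0) = line p0 d x0" using traj_straight[OF T] by simp
    ultimately show False using i0 by (auto simp: is_sink_def)
  qed
qed

lemma count:
  assumes perf: "perfect_layout m n c sink A" and ent: "(p0, d) \<in> entries m n"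
    and inj: "inj_on sink {..<c}"
    and i0: "i0 < c" "sink i0 = line p0 d x0"
    and ns: "\<forall>k<x0. \<not> is_sink c sink (line p0 d k)"
  shows "c - 1 \<le> x0"
proof -
  define f where "f j = (SOME k. k < x0 \<and> (\<exists>e. e \<noteq> d \<and> A (line p0 d k) = Some (j, e)))" for j
  have f: "f j < x0 \<and> (\<exists>e. e \<noteq> d \<and> A (line p0 d (f j)) = Some (j, e))"
    if "j \<in> {..<c} - {i0}" for j
  proof -
    have "j < c" "j \<noteq> i0" using that by auto
    from key[OF perf ent inj i0 ns this] show ?thesis unfolding f_def by (rule someI_ex)
  qed
  have "inj_on f ({..<c} - {i0})"
  proof (rule inj_onI)
    fix a b assume a: "a \<in> {..<c} - {i0}" and b: "b \<in> {..<c} - {i0}" and e: "f a = f b"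
    from f[OF a] obtain e1 where e1: "A (line p0 d (f a)) = Some (a, e1)" by blast
    from f[OF b] obtain e2 where e2: "A (line p0 d (f b)) = Some (b, e2)" by blast
    from e1 e2 e show "a = b" by (metis option.inject prod.inject)
  qed
  moreover have "f ` ({..<c} - {i0}) \<subseteq> {..<x0}"
  proof
    fix z assume "z \<in> f ` ({..<c} - {i0})"
    then obtain j where jj: "j \<in> {..<c} - {i0}" and z: "z = f j" by blast
    have "f j < x0" using f[OF jj] by (rule conjunct1)
    then show "z \<in> {..<x0}" using z by simp
  qed
  ultimately have "card ({..<c} - {i0}) \<le> card {..<x0}"
    by (rule card_inj_on_le) simp
  moreover have "card ({..<c} - {i0}) = c - 1" using i0(1) by (simp add: card_Diff_singleton)
  ultimately show ?thesis by simp
qed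

lemma first_sink:
  assumes perf: "perfect_layout m n c sink A" and ent: "(p0, d) \<in> entries m n"
    and inj: "inj_on sink {..<c}"
    and s: "is_sink c sink (line p0 d K)"
  shows "\<exists>x0\<le>K. c - 1 \<le> x0 \<and> (\<forall>k<x0. \<not> is_sink c sink (line p0 d k))"
proof -
  define x0 where "x0 = (LEAST k. is_sink c sink (line p0 d k))"
  have "is_sink c sink (line p0 d x0)" unfolding x0_def using s by (rule LeastI)
  then obtain i0 where i0: "i0 < c" "sink i0 = line p0 d x0" by (auto simp: is_sink_def)
  have ns: "\<forall>k<x0. \<not> is_sink c sink (line p0 d k)" unfolding x0_def using not_less_Least by blast
  have "x0 \<le> K" unfolding x0_def using s by (rule Least_le)
  with count[OF perf ent inj i0 ns] ns show ?thesis by blast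
qed

theorem mainTheorem9:
  fixes m n c :: nat and sink :: "nat \<Rightarrow> cell"
  assumes "is_board m n c sink"
    and "sink_near_boundary m n c sink"
  shows "\<not> (\<exists>A. perfect_layout m n c sink A)"
proof
  assume "\<exists>A. perfect_layout m n c sink A"
  then obtain A where perf: "perfect_layout m n c sink A" by blast
  have inj: "inj_on sink {..<c}" using assms(1) by (simp add: is_board_def)
  obtain i x y where i: "i < c" and sxy: "sink i = (x, y)" and
    cases: "card {x'. 0 \<le> x' \<and> x' < x \<and> \<not> is_sink c sink (x', y)} < c - 1
     \<or> card {x'. x < x' \<and> x' < int m \<and> \<not> is_sink c sink (x', y)} < c - 1
     \<or> card {y'. 0 \<le> y' \<and> y' < y \<and> \<not> is_sink c sink (x, y')} < c - 1
     \<or> card {y'. y < y' \<and> y' < int n \<and> \<not> is_sink c sink (x, y')} < c - 1"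
  proof -
    obtain i where i: "i < c" and L: "let (x, y) = sink i in
       card {x'. 0 \<le> x' \<and> x' < x \<and> \<not> is_sink c sink (x', y)} < c - 1
     \<or> card {x'. x < x' \<and> x' < int m \<and> \<not> is_sink c sink (x', y)} < c - 1
     \<or> card {y'. 0 \<le> y' \<and> y' < y \<and> \<not> is_sink c sink (x, y')} < c - 1
     \<or> card {y'. y < y' \<and> y' < int n \<and> \<not> is_sink c sink (x, y')} < c - 1"
      using assms(2) unfolding sink_near_boundary_def by blast
    obtain x y where xy: "sink i = (x, y)" by (cases "sink i")
    show ?thesis using that[OF i xy] L xy by simp
  qed
  have g: "0 \<le> x" "x < int m" "0 \<le> y" "y < int n"
    using assms(1) i sxy by (auto simp: is_board_def in_grid_def)
  have sk: "is_sink c sink (x, y)" using i sxy by (auto simp: is_sink_def)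
  have c1: "c - 1 \<le> card {x'. 0 \<le> x' \<and> x' < x \<and> \<not> is_sink c sink (x', y)}"
  proof -
    have e: "((0, y), South) \<in> entries m n" using g by (auto simp: entries_def)
    have "is_sink c sink (line (0, y) South (nat x))" using sk g by (simp add: line_def)
    from first_sink[OF perf e inj this] obtain x0 where
      x0: "x0 \<le> nat x" "c - 1 \<le> x0" "\<forall>k<x0. \<not> is_sink c sink (line (0, y) South k)" by blast
    have "card {..<x0} \<le> card {x'. 0 \<le> x' \<and> x' < x \<and> \<not> is_sink c sink (x', y)}"
    proof (rule card_inj_on_le[where f = int])
      show "inj_on int {..<x0}" by simp
      show "int ` {..<x0} \<subseteq> {x'. 0 \<le> x' \<and> x' < x \<and> \<not> is_sink c sink (x', y)}"
        using x0 by (auto simp: line_def)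
      show "finite {x'. 0 \<le> x' \<and> x' < x \<and> \<not> is_sink c sink (x', y)}"
        by (rule finite_subset[of _ "{0..<x}"]) auto
    qed
    then show ?thesis using x0 by simp
  qed
  have c2: "c - 1 \<le> card {x'. x < x' \<and> x' < int m \<and> \<not> is_sink c sink (x', y)}"
  proof -
    have e: "((int m - 1, y), North) \<in> entries m n" using g by (auto simp: entries_def)
    have "is_sink c sink (line (int m - 1, y) North (nat (int m - 1 - x)))" using sk g by (simp add: line_def)
    from first_sink[OF perf e inj this] obtain x0 where
      x0: "x0 \<le> nat (int m - 1 - x)" "c - 1 \<le> x0" "\<forall>k<x0. \<not> is_sink c sink (line (int m - 1, y) North k)" by blast
    have "card {..<x0} \<le> card {x'. x < x' \<and> x' < int m \<and> \<not> is_sink c sink (x', y)}"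
    proof (rule card_inj_on_le[where f = "\<lambda>k. int m - 1 - int k"])
      show "inj_on (\<lambda>k. int m - 1 - int k) {..<x0}" by (auto simp: inj_on_def)
      show "(\<lambda>k. int m - 1 - int k) ` {..<x0} \<subseteq> {x'. x < x' \<and> x' < int m \<and> \<not> is_sink c sink (x', y)}"
        using x0 by (auto simp: line_def)
      show "finite {x'. x < x' \<and> x' < int m \<and> \<not> is_sink c sink (x', y)}"
        by (rule finite_subset[of _ "{x..<int m}"]) auto
    qed
    then show ?thesis using x0 by simp
  qed
  have c3: "c - 1 \<le> card {y'. 0 \<le> y' \<and> y' < y \<and> \<not> is_sink c sink (x, y')}"
  proof -
    have e: "((x, 0), East) \<in> entries m n" using g by (auto simp: entries_def)
    have "is_sink c sink (line (x, 0) East (nat y))" using sk g by (simp add: line_def)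
    from first_sink[OF perf e inj this] obtain x0 where
      x0: "x0 \<le> nat y" "c - 1 \<le> x0" "\<forall>k<x0. \<not> is_sink c sink (line (x, 0) East k)" by blast
    have "card {..<x0} \<le> card {y'. 0 \<le> y' \<and> y' < y \<and> \<not> is_sink c sink (x, y')}"
    proof (rule card_inj_on_le[where f = int])
      show "inj_on int {..<x0}" by simp
      show "int ` {..<x0} \<subseteq> {y'. 0 \<le> y' \<and> y' < y \<and> \<not> is_sink c sink (x, y')}"
        using x0 by (auto simp: line_def)
      show "finite {y'. 0 \<le> y' \<and> y' < y \<and> \<not> is_sink c sink (x, y')}"
        by (rule finite_subset[of _ "{0..<y}"]) auto
    qed
    then show ?thesis using x0 by simp
  qed
  have c4: "c - 1 \<le> card {y'. y < y' \<and> y' < int n \<and> \<not> is_sink c sink (x, y')}"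
  proof -
    have e: "((x, int n - 1), West) \<in> entries m n" using g by (auto simp: entries_def)
    have "is_sink c sink (line (x, int n - 1) West (nat (int n - 1 - y)))" using sk g by (simp add: line_def)
    from first_sink[OF perf e inj this] obtain x0 where
      x0: "x0 \<le> nat (int n - 1 - y)" "c - 1 \<le> x0" "\<forall>k<x0. \<not> is_sink c sink (line (x, int n - 1) West k)" by blast
    have "card {..<x0} \<le> card {y'. y < y' \<and> y' < int n \<and> \<not> is_sink c sink (x, y')}"
    proof (rule card_inj_on_le[where f = "\<lambda>k. int n - 1 - int k"])
      show "inj_on (\<lambda>k. int n - 1 - int k) {..<x0}" by (auto simp: inj_on_def)
      show "(\<lambda>k. int n - 1 - int k) ` {..<x0} \<subseteq> {y'. y < y' \<and> y' < int n \<and> \<not> is_sink c sink (x, y')}"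
        using x0 by (auto simp: line_def)
      show "finite {y'. y < y' \<and> y' < int n \<and> \<not> is_sink c sink (x, y')}"
        by (rule finite_subset[of _ "{y..<int n}"]) auto
    qed
    then show ?thesis using x0 by simp
  qed
  show False using cases c1 c2 c3 c4 by linarith
qed

end
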